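(* There exists a constant $D>1$ such that testing $\mathsf{Lattice\text{-}Eval}((\{0,1\};\wedge,\vee),D)$ restricted to instances with threshold $\ell=1$ with one-sided error requires a linear number of queries; i.e., there is $\epsilon>0$ such that every one-sided-error $\epsilon$-tester for this problem makes $\Omega(n)$ queries on some instances with $n$ variables.
   Context: For a finite lattice $\mathbb L=(L;\wedge,\vee)$ and a constant $D>1$, $\mathsf{Lattice\text{-}Eval}(\mathbb L,D)$ is the assignment problem whose instances consist of: a circuit $C$ on a variable set $V$ over the basis $\{\wedge,\vee\}$ (gates of fan-in 2) of depth less than $D+D\log_2|V|$; an element $\ell\in L$; and a weight function $w:V\to[0,1]$ with $\sum_x w(x)=1$. Assignments are maps $f:V\to L$, and $f$ is satisfying if $C(f)\ge\ell$ in the lattice order, where $C(f)$ is the value of $C$ under $f$. Distance: $\mathrm{dist}_{\mathcal I}(f)$ is the minimum over satisfying $g$ of $\sum_{x:f(x)\ne g(x)}w(x)$; $f$ is $\epsilon$-far if this exceeds $\epsilon$. A one-sided $\epsilon$-tester gets the instance and $\epsilon$, queries values of $f$, always accepts satisfying $f$ and rejects $\epsilon$-far $f$ with probability $\ge 2/3$. *)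

theory Defs
  imports "HOL-Probability.Probability"
begin

text \<open>Circuits over the basis {and, or} with fan-in 2, variables indexed by naturals.
  Circuits are represented as formula trees (unfolding a circuit does not change its
  value or its depth).\<close>
datatype circ = CVar nat | CAnd circ circ | COr circ circ

fun cvars :: "circ \<Rightarrow> nat set" where
  "cvars (CVar x) = {x}"
| "cvars (CAnd a b) = cvars a \<union> cvars b"
| "cvars (COr a b) = cvars a \<union> cvars b"

fun cdepth :: "circ \<Rightarrow> nat" where
  "cdepth (CVar x) = 0"
| "cdepth (CAnd a b) = Suc (max (cdepth a) (cdepth b))"
| "cdepth (COr a b) = Suc (max (cdepth a) (cdepth b))"

text \<open>Evaluation in the two-element lattice ({0,1}; and, or), with 0 = False, 1 = True.\<close>
fun ceval :: "circ \<Rightarrow> (nat \<Rightarrow> bool) \<Rightarrow> bool" where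
  "ceval (CVar x) f = f x"
| "ceval (CAnd a b) f = (ceval a f \<and> ceval b f)"
| "ceval (COr a b) f = (ceval a f \<or> ceval b f)"

text \<open>An cinstance with threshold l = 1: variable set V, circuit C, weights w.\<close>
type_synonym cinstance = "nat set \<times> circ \<times> (nat \<Rightarrow> real)"

definition valid_instance :: "real \<Rightarrow> cinstance \<Rightarrow> bool" where
  "valid_instance D I = (case I of (V, C, w) \<Rightarrow>
      finite V \<and> cvars C \<subseteq> V \<and>
      real (cdepth C) < D + D * log 2 (real (card V)) \<and>
      (\<forall>x\<in>V. 0 \<le> w x \<and> w x \<le> 1) \<and> (\<Sum>x\<in>V. w x) = 1)"

text \<open>Satisfying: C(f) \<ge> 1, i.e. C(f) = 1.\<close>
definition satisfying :: "cinstance \<Rightarrow> (nat \<Rightarrow> bool) \<Rightarrow> bool" where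
  "satisfying I f = (case I of (V, C, w) \<Rightarrow> ceval C f)"

definition inst_dist :: "cinstance \<Rightarrow> (nat \<Rightarrow> bool) \<Rightarrow> real" where
  "inst_dist I f = (case I of (V, C, w) \<Rightarrow>
     Inf ((\<lambda>g. \<Sum>x\<in>{x\<in>V. f x \<noteq> g x}. w x) ` {g. satisfying I g}))"

definition eps_far :: "real \<Rightarrow> cinstance \<Rightarrow> (nat \<Rightarrow> bool) \<Rightarrow> bool" where
  "eps_far \<epsilon> I f = (inst_dist I f > \<epsilon>)"

text \<open>Deterministic adaptive query algorithms (decision trees); a randomized tester is a
  probability distribution over decision trees (chosen depending on the input cinstance).\<close>
datatype qtree = Leaf bool | Query nat "bool \<Rightarrow> qtree"

primrec run :: "qtree \<Rightarrow> (nat \<Rightarrow> bool) \<Rightarrow> bool" where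
  "run (Leaf b) f = b"
| "run (Query x k) f = run (k (f x)) f"

primrec nqueries :: "qtree \<Rightarrow> (nat \<Rightarrow> bool) \<Rightarrow> nat" where
  "nqueries (Leaf b) f = 0"
| "nqueries (Query x k) f = Suc (nqueries (k (f x)) f)"

definition accept_prob :: "qtree pmf \<Rightarrow> (nat \<Rightarrow> bool) \<Rightarrow> real" where
  "accept_prob P f = measure_pmf.prob P {t. run t f}"

definition one_sided_tester :: "real \<Rightarrow> real \<Rightarrow> (cinstance \<Rightarrow> qtree pmf) \<Rightarrow> bool" where
  "one_sided_tester D \<epsilon> T = (\<forall>I. valid_instance D I \<longrightarrow>
      (\<forall>f. satisfying I f \<longrightarrow> accept_prob (T I) f = 1) \<and>
      (\<forall>f. eps_far \<epsilon> I f \<longrightarrow> 1 - accept_prob (T I) f \<ge> 2/3))"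

end

theory Submission
  imports Defs
begin

definition maj :: "circ \<Rightarrow> circ \<Rightarrow> circ \<Rightarrow> circ" where
  "maj a b c = COr (CAnd a b) (CAnd c (COr a b))"

definition majb :: "bool \<Rightarrow> bool \<Rightarrow> bool \<Rightarrow> bool" where
  "majb a b c = ((a \<and> b) \<or> (c \<and> (a \<or> b)))"

fun rf :: "nat \<Rightarrow> nat \<Rightarrow> circ pmf" where
  "rf n 0 = map_pmf CVar (pmf_of_set {..<n})"
| "rf n (Suc k) = bind_pmf (rf n k) (\<lambda>a. bind_pmf (rf n k) (\<lambda>b. bind_pmf (rf n k) (\<lambda>c. return_pmf (maj a b c))))"

lemma ceval_maj[simp]: "ceval (maj a b c) f = majb (ceval a f) (ceval b f) (ceval c f)"
  by (simp add: maj_def majb_def)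

lemma rf_support: "n > 0 \<Longrightarrow> C \<in> set_pmf (rf n k) \<Longrightarrow> cvars C \<subseteq> {..<n} \<and> cdepth C = 3*k"
proof (induction k arbitrary: C)
  case 0
  have "{..<n} \<noteq> {}" using 0 by auto
  then have "set_pmf (pmf_of_set {..<n}) = {..<n}" by (simp add: set_pmf_of_set)
  then have "C \<in> CVar ` {..<n}" using 0(2) by simp
  then show ?case by auto
next
  case (Suc k)
  from Suc.prems(2) obtain a b c where abc: "a \<in> set_pmf (rf n k)" "b \<in> set_pmf (rf n k)" "c \<in> set_pmf (rf n k)" "C = maj a b c" by auto
  have ha: "cvars a \<subseteq> {..<n}" "cdepth a = 3*k" using Suc.IH[OF Suc.prems(1) abc(1)] by auto
  have hb: "cvars b \<subseteq> {..<n}" "cdepth b = 3*k" using Suc.IH[OF Suc.prems(1) abc(2)] by auto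
  have hc: "cvars c \<subseteq> {..<n}" "cdepth c = 3*k" using Suc.IH[OF Suc.prems(1) abc(3)] by auto
  show ?case using ha hb hc abc(4) by (simp add: maj_def)
qed

definition qf :: "real \<Rightarrow> real" where "qf p = 3*p^2 - 2*p^3"

lemma B_eq: assumes "n > 0"
  shows "map_pmf (\<lambda>C. ceval C x) (rf n k) = bernoulli_pmf ((qf ^^ k) (card ({..<n} \<inter> {i. x i}) / n))
     \<and> 0 \<le> (qf ^^ k) (card ({..<n} \<inter> {i. x i}) / n) \<and> (qf ^^ k) (card ({..<n} \<inter> {i. x i}) / n) \<le> 1"
proof (induction k)
  case 0
  let ?p = "card ({..<n} \<inter> {i. x i}) / real n"
  have c: "card ({..<n} \<inter> {i. x i}) \<le> n" 
  proof -
    have "card ({..<n} \<inter> {i. x i}) \<le> card {..<n}" by (rule card_mono) auto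
    then show ?thesis by simp
  qed
  have p1: "?p \<le> 1" using c assms by simp
  have p0: "0 \<le> ?p" by simp
  have "map_pmf (\<lambda>C. ceval C x) (rf n 0) = bernoulli_pmf ?p"
  proof (rule pmf_eqI)
    fix b
    show "pmf (map_pmf (\<lambda>C. ceval C x) (rf n 0)) b = pmf (bernoulli_pmf ?p) b"
    proof -
      have ne: "{..<n} \<noteq> {}" using assms by auto
      have m: "\<And>A. measure_pmf.prob (pmf_of_set {..<n}) A = card ({..<n} \<inter> A) / n"
        using ne by (subst measure_pmf_of_set) auto
      have e: "{..<n} \<inter> - {i. x i} = {..<n} - ({..<n} \<inter> {i. x i})" by auto
      have "card ({..<n} \<inter> - {i. x i}) = n - card ({..<n} \<inter> {i. x i})"
        unfolding e by (subst card_Diff_subset) auto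
      then have "real (card ({..<n} \<inter> - {i. x i})) = n - card ({..<n} \<inter> {i. x i})"
        using c by simp
      note cF = this
      have r: "map_pmf (\<lambda>C. ceval C x) (rf n 0) = map_pmf x (pmf_of_set {..<n})" by (simp add: map_pmf_comp)
      have vT: "x -` {True} = {i. x i}" by auto
      have vF: "x -` {False} = - {i. x i}" by auto
      show ?thesis
      proof (cases b)
        case True
        then show ?thesis unfolding r using p0 p1 by (simp add: pmf_map vT m)
      next
        case False
        have "real n \<noteq> 0" using assms by simp
        then have "(real n - real (card ({..<n} \<inter> {i. x i}))) / real n = 1 - real (card ({..<n} \<inter> {i. x i})) / real n"
          by (simp add: diff_divide_distrib)
        then show ?thesis unfolding r using p0 p1 False cF c by (simp add: pmf_map vF m of_nat_diff)
      qed
    qed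
  qed
  then show ?case using p0 p1 by simp
next
  case (Suc k)
  let ?p = "(qf ^^ k) (card ({..<n} \<inter> {i. x i}) / n)"
  have p0: "0 \<le> ?p" and p1: "?p \<le> 1" and B: "map_pmf (\<lambda>C. ceval C x) (rf n k) = bernoulli_pmf ?p"
    using Suc by auto
  have q0: "0 \<le> qf ?p"
  proof -
    have "qf ?p = ?p^2 * (3 - 2*?p)" by (simp add: qf_def power2_eq_square power3_eq_cube algebra_simps)
    then show ?thesis using p0 p1 by simp
  qed
  have q1: "qf ?p \<le> 1"
  proof -
    have "1 - qf ?p = (1-?p)^2 * (1 + 2*?p)" by (simp add: qf_def power2_eq_square power3_eq_cube algebra_simps)
    moreover have "(1-?p)^2 * (1 + 2*?p) \<ge> 0" using p0 by simp
    ultimately show ?thesis by linarith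
  qed
  let ?M = "map_pmf (\<lambda>C. ceval C x) (rf n k)"
  have "map_pmf (\<lambda>C. ceval C x) (rf n (Suc k)) = bind_pmf (rf n k) (\<lambda>a. bind_pmf (rf n k) (\<lambda>b. bind_pmf (rf n k) (\<lambda>c. return_pmf (majb (ceval a x) (ceval b x) (ceval c x)))))"
    by (simp add: map_bind_pmf map_return_pmf)
  also have "\<dots> = bind_pmf ?M (\<lambda>a. bind_pmf ?M (\<lambda>b. bind_pmf ?M (\<lambda>c. return_pmf (majb a b c))))"
    by (simp add: bind_map_pmf)
  also have "\<dots> = bind_pmf (bernoulli_pmf ?p) (\<lambda>a. bind_pmf (bernoulli_pmf ?p) (\<lambda>b. bind_pmf (bernoulli_pmf ?p) (\<lambda>c. return_pmf (majb a b c))))"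
    by (simp only: B)
  also have "\<dots> = bernoulli_pmf (qf ?p)"
  proof (rule pmf_eqI)
    fix v
    show "pmf (bind_pmf (bernoulli_pmf ?p) (\<lambda>a. bind_pmf (bernoulli_pmf ?p) (\<lambda>b. bind_pmf (bernoulli_pmf ?p) (\<lambda>c. return_pmf (majb a b c))))) v = pmf (bernoulli_pmf (qf ?p)) v"
      using p0 p1 q0 q1 by (cases v) (simp_all add: pmf_bind majb_def qf_def power2_eq_square power3_eq_cube algebra_simps)
  qed
  finally show ?case using q0 q1 by simp
qed
lemma prob_true: assumes "n > 0"
  shows "measure_pmf.prob (rf n k) {C. ceval C x} = (qf ^^ k) (card ({..<n} \<inter> {i. x i}) / n)"
proof -
  let ?p = "(qf ^^ k) (card ({..<n} \<inter> {i. x i}) / n)"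
  have B: "map_pmf (\<lambda>C. ceval C x) (rf n k) = bernoulli_pmf ?p" "0 \<le> ?p" "?p \<le> 1"
    using B_eq[OF assms] by auto
  have "{C. ceval C x} = (\<lambda>C. ceval C x) -` {True}" by auto
  then have "measure_pmf.prob (rf n k) {C. ceval C x} = measure_pmf.prob (map_pmf (\<lambda>C. ceval C x) (rf n k)) {True}"
    by simp
  also have "\<dots> = ?p" using B by (simp add: measure_pmf_single)
  finally show ?thesis .
qed

lemma qf_bound: "0 \<le> a \<Longrightarrow> a \<le> 1/6 \<Longrightarrow> 0 \<le> (qf ^^ k) a \<and> 3 * (qf ^^ k) a \<le> (1/2)^(2^k)"
proof (induction k)
  case 0
  then show ?case by simp
next
  case (Suc k)
  let ?b = "(qf ^^ k) a"
  have b0: "0 \<le> ?b" and b3: "3 * ?b \<le> (1/2)^(2^k)" using Suc by auto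
  have "(1/2::real)^(2^k) \<le> (1/2)^1" by (rule power_decreasing) auto
  then have b1: "?b \<le> 1/6" using b3 by simp
  have e: "qf ?b = ?b^2 * (3 - 2 * ?b)" by (simp add: qf_def power2_eq_square power3_eq_cube algebra_simps)
  have q0: "0 \<le> qf ?b" unfolding e using b0 b1 by simp
  have "?b^2 * (3 - 2 * ?b) \<le> ?b^2 * 3" by (rule mult_left_mono) (use b0 in auto)
  then have "qf ?b \<le> 3 * ?b^2" unfolding e by simp
  then have "3 * qf ?b \<le> (3 * ?b)^2" by (simp add: power2_eq_square)
  also have "\<dots> \<le> ((1/2)^(2^k))^2" using b3 b0 by (intro power_mono) auto
  also have "\<dots> = (1/2)^(2^Suc k)" by (simp add: power_mult[symmetric] mult.commute)
  finally show ?case using q0 by simp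
qed

lemma qf_compl: "1 - (qf ^^ k) a = (qf ^^ k) (1 - a)"
proof (induction k)
  case 0
  then show ?case by simp
next
  case (Suc k)
  have "\<And>b. 1 - qf b = qf (1 - b)" by (simp add: qf_def power2_eq_square power3_eq_cube algebra_simps)
  then show ?case using Suc by (simp add: Suc[symmetric])
qed

definition goodC :: "nat \<Rightarrow> circ \<Rightarrow> bool" where
  "goodC n C = (\<forall>S\<subseteq>{..<n}. (6 * card S \<le> n \<longrightarrow> \<not> ceval C (\<lambda>i. i \<in> S)) \<and>
                                (5 * n \<le> 6 * card S \<longrightarrow> ceval C (\<lambda>i. i \<in> S)))"

lemma good_exists: assumes n0: "n > 0" and nh: "n \<le> 2^h"
  shows "\<exists>C. cvars C \<subseteq> {..<n} \<and> cdepth C = 3*h \<and> goodC n C"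
proof -
  define Bad where "Bad S = {C. (6 * card S \<le> n \<and> ceval C (\<lambda>i. i \<in> S)) \<or> (5 * n \<le> 6 * card S \<and> \<not> ceval C (\<lambda>i. i \<in> S))}" for S
  have pw: "(1/2::real)^(2^h) \<le> (1/2)^n" by (rule power_decreasing) (use nh in auto)
  have bS: "measure_pmf.prob (rf n h) (Bad S) \<le> (1/3) * (1/2)^n" if S: "S \<subseteq> {..<n}" for S
  proof -
    have fS: "finite S" using S finite_subset by blast
    have cS: "{..<n} \<inter> {i. i \<in> S} = S" using S by auto
    have cn: "card S \<le> n" using card_mono[OF _ S] by simp
    let ?p = "real (card S) / real n"
    have pt: "measure_pmf.prob (rf n h) {C. ceval C (\<lambda>i. i \<in> S)} = (qf ^^ h) ?p"
      using prob_true[OF n0, of h "\<lambda>i. i \<in> S"] cS by simp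
    consider (lo) "6 * card S \<le> n" | (hi) "5 * n \<le> 6 * card S" | (mid) "\<not> 6 * card S \<le> n" "\<not> 5 * n \<le> 6 * card S" by blast
    then show ?thesis
    proof cases
      case lo
      then have "\<not> 5 * n \<le> 6 * card S" using n0 by linarith
      then have bl: "Bad S = {C. ceval C (\<lambda>i. i \<in> S)}" using lo unfolding Bad_def by auto
      have "?p \<le> 1/6" using lo n0 by (simp add: field_simps)
      then have "3 * (qf ^^ h) ?p \<le> (1/2)^(2^h)" using qf_bound[of ?p h] by auto
      then show ?thesis unfolding bl pt using pw by linarith
    next
      case hi
      then have "\<not> 6 * card S \<le> n" using n0 by linarith
      then have e: "Bad S = UNIV - {C. ceval C (\<lambda>i. i \<in> S)}" using hi unfolding Bad_def by auto
      have "measure_pmf.prob (rf n h) (Bad S) = 1 - (qf ^^ h) ?p"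
        unfolding e using measure_pmf.prob_compl[where M="rf n h" and A="{C. ceval C (\<lambda>i. i \<in> S)}"] pt by simp
      also have "\<dots> = (qf ^^ h) (1 - ?p)" by (rule qf_compl)
      finally have pe: "measure_pmf.prob (rf n h) (Bad S) = (qf ^^ h) (1 - ?p)" .
      have "1 - ?p \<le> 1/6" using hi n0 by (simp add: field_simps)
      moreover have "0 \<le> 1 - ?p" using cn n0 by (simp add: field_simps)
      ultimately have "3 * (qf ^^ h) (1 - ?p) \<le> (1/2)^(2^h)" using qf_bound[of "1 - ?p" h] by auto
      then show ?thesis using pe pw by linarith
    next
      case mid
      then have "Bad S = {}" unfolding Bad_def by auto
      then show ?thesis by simp
    qed
  qed
  have "measure_pmf.prob (rf n h) (\<Union>S\<in>Pow {..<n}. Bad S) \<le> (\<Sum>S\<in>Pow {..<n}. measure_pmf.prob (rf n h) (Bad S))"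
    by (rule measure_pmf.finite_measure_subadditive_finite) auto
  also have "\<dots> \<le> (\<Sum>S\<in>Pow {..<n}. (1/3) * (1/2::real)^n)"
    by (rule sum_mono) (use bS in auto)
  also have "\<dots> = 1/3" by (simp add: card_Pow power_one_over)
  finally have lt: "measure_pmf.prob (rf n h) (\<Union>S\<in>Pow {..<n}. Bad S) < 1" by simp
  have "\<not> set_pmf (rf n h) \<subseteq> (\<Union>S\<in>Pow {..<n}. Bad S)"
  proof
    assume sub: "set_pmf (rf n h) \<subseteq> (\<Union>S\<in>Pow {..<n}. Bad S)"
    have "measure_pmf.prob (rf n h) (\<Union>S\<in>Pow {..<n}. Bad S) = 1"
      using sub by (subst measure_pmf.prob_eq_1) (auto simp: AE_measure_pmf_iff)
    then show False using lt by simp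
  qed
  then obtain C where C: "C \<in> set_pmf (rf n h)" "C \<notin> (\<Union>S\<in>Pow {..<n}. Bad S)" by blast
  have "goodC n C" unfolding goodC_def using C(2) unfolding Bad_def by auto
  then show ?thesis using rf_support[OF n0 C(1)] by blast
qed

primrec qset :: "qtree \<Rightarrow> (nat \<Rightarrow> bool) \<Rightarrow> nat set" where
  "qset (Leaf b) f = {}"
| "qset (Query x k) f = insert x (qset (k (f x)) f)"

lemma qset_card: "finite (qset t f) \<and> card (qset t f) \<le> nqueries t f"
proof (induction t)
  case (Leaf b)
  then show ?case by simp
next
  case (Query x k)
  have "finite (qset (k (f x)) f) \<and> card (qset (k (f x)) f) \<le> nqueries (k (f x)) f" using Query by simp
  then show ?case by (auto simp: card_insert_if)
qed

lemma run_agree: "(\<forall>x\<in>qset t f. g x = f x) \<Longrightarrow> run t g = run t f"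
proof (induction t)
  case (Leaf b)
  then show ?case by simp
next
  case (Query x k)
  then show ?case by simp
qed

lemma ceval_cong: "(\<forall>x\<in>cvars C. f x = g x) \<Longrightarrow> ceval C f = ceval C g"
  by (induction C) auto


lemma depth_ok: assumes n0: "n > 0" and hdef: "h = (LEAST k. n \<le> 2^k)"
  shows "real (3*h) < 3 + 3 * log 2 (real n)" and "n \<le> 2^h"
proof -
  have "n < 2^n" by (rule less_exp)
  then have ex: "\<exists>k. n \<le> 2^k" by (intro exI[of _ n]) simp
  show nh: "n \<le> 2^h" unfolding hdef by (rule LeastI_ex[OF ex])
  have lg0: "0 \<le> log 2 (real n)" using n0 by simp
  show "real (3*h) < 3 + 3 * log 2 (real n)"
  proof (cases h)
    case 0
    then show ?thesis using lg0 by simp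
  next
    case (Suc h')
    have "\<not> n \<le> 2^h'" using not_less_Least[of h' "\<lambda>k. n \<le> 2^k"] hdef Suc by simp
    then have "real (2^h') < real n" by simp
    then have "(2::real) ^ h' < real n" by simp
    then have "real h' < log 2 (real n)" by (rule less_log_of_power) simp
    then show ?thesis using Suc by simp
  qed
qed

lemma support_accepts:
  assumes "accept_prob P g = 1" "t \<in> set_pmf P" shows "run t g"
proof -
  have "measure_pmf.prob P {t. run t g} = 1" using assms(1) unfolding accept_prob_def .
  then have "AE t in measure_pmf P. t \<in> {t. run t g}" by (subst (asm) measure_pmf.prob_eq_1) auto
  then show ?thesis using assms(2) by (simp add: AE_measure_pmf_iff)
qed

theorem mainTheorem13:
  shows "\<exists>D::real. D > 1 \<and> (\<exists>\<epsilon>::real. \<epsilon> > 0 \<and>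
     (\<exists>c::real. c > 0 \<and> (\<exists>N::nat. \<forall>T. one_sided_tester D \<epsilon> T \<longrightarrow>
        (\<forall>n\<ge>N. \<exists>I. valid_instance D I \<and> card (fst I) = n \<and>
            (\<exists>t\<in>set_pmf (T I). \<exists>f. real (nqueries t f) \<ge> c * real n)))))"
proof -
  have main: "\<forall>T. one_sided_tester 3 (1/7) T \<longrightarrow>
        (\<forall>n\<ge>1. \<exists>I. valid_instance 3 I \<and> card (fst I) = n \<and>
            (\<exists>t\<in>set_pmf (T I). \<exists>f. real (nqueries t f) \<ge> 1/6 * real n))"
  proof (intro allI impI)
  fix T and n :: nat
  assume tester: "one_sided_tester 3 (1/7) T" and n1: "1 \<le> n"
  have n0: "n > 0" using n1 by simp
  define h where "h = (LEAST k. n \<le> 2^k)"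
  have dh: "real (3*h) < 3 + 3 * log 2 (real n)" and nh: "n \<le> 2^h" using depth_ok[OF n0 h_def] by auto
  obtain C where C: "cvars C \<subseteq> {..<n}" "cdepth C = 3*h" "goodC n C" using good_exists[OF n0 nh] by blast
  define I where "I = ({..<n}, C, (\<lambda>_::nat. 1 / real n))"
  have valid: "valid_instance 3 I"
    unfolding valid_instance_def I_def using C dh n0 by simp
  have sat_iff: "satisfying I g \<longleftrightarrow> ceval C (\<lambda>i. i \<in> {x\<in>{..<n}. g x})" for g
  proof -
    have "ceval C g = ceval C (\<lambda>i. i \<in> {x\<in>{..<n}. g x})"
      by (rule ceval_cong) (use C(1) in auto)
    then show ?thesis unfolding satisfying_def I_def by simp
  qed
  have good: "\<And>S. S \<subseteq> {..<n} \<Longrightarrow> (6 * card S \<le> n \<longrightarrow> \<not> ceval C (\<lambda>i. i \<in> S)) \<and>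
                                (5 * n \<le> 6 * card S \<longrightarrow> ceval C (\<lambda>i. i \<in> S))"
    using C(3) unfolding goodC_def by blast
  define f0 where "f0 = (\<lambda>_::nat. False)"
  have far: "eps_far (1/7) I f0"
  proof -
    let ?X = "(\<lambda>g. \<Sum>x\<in>{x\<in>{..<n}. f0 x \<noteq> g x}. (1::real) / real n) ` {g. satisfying I g}"
    have ne: "?X \<noteq> {}"
    proof -
      have "satisfying I (\<lambda>_. True)" unfolding sat_iff using good[of "{..<n}"] by simp
      then show ?thesis by blast
    qed
    have lb: "1/6 \<le> v" if vX: "v \<in> ?X" for v
    proof -
      obtain g where g: "satisfying I g" "v = (\<Sum>x\<in>{x\<in>{..<n}. f0 x \<noteq> g x}. (1::real) / real n)" using vX by blast
      let ?S = "{x\<in>{..<n}. g x}"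
      have "\<not> 6 * card ?S \<le> n" using good[of ?S] g(1) unfolding sat_iff by auto
      then have "real n < 6 * real (card ?S)" by linarith
      moreover have "v = real (card ?S) / real n" using g(2) unfolding f0_def by simp
      moreover have "real n > 0" using n0 by simp
      ultimately have vn: "v * real n = real (card ?S)" and lt6: "real n < 6 * real (card ?S)" by simp_all
      have "real n * (6 * v) = 6 * (v * real n)" by (simp add: mult_ac)
      then have e2: "real n * (6 * v) = 6 * real (card ?S)" using vn by simp
      have "real n * 1 < real n * (6 * v)" using lt6 unfolding e2 by simp
      then have "1 < 6 * v" using \<open>real n > 0\<close> mult_less_cancel_left_pos by blast
      then show ?thesis by simp
    qed
    have "1/6 \<le> Inf ?X" by (rule cInf_greatest[OF ne lb])
    then show ?thesis unfolding eps_far_def inst_dist_def I_def by simp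
  qed
  show "\<exists>I. valid_instance 3 I \<and> card (fst I) = n \<and>
            (\<exists>t\<in>set_pmf (T I). \<exists>f. real (nqueries t f) \<ge> 1/6 * real n)"
  proof (rule exI[of _ I], intro conjI)
    show "valid_instance 3 I" by (rule valid)
    show "card (fst I) = n" unfolding I_def by simp
    show "\<exists>t\<in>set_pmf (T I). \<exists>f. real (nqueries t f) \<ge> 1/6 * real n"
    proof (rule ccontr)
      assume "\<not> ?thesis"
      then have few: "\<And>t. t \<in> set_pmf (T I) \<Longrightarrow> real (nqueries t f0) < 1/6 * real n"
        by (meson not_le)
      have tI: "(\<forall>f. satisfying I f \<longrightarrow> accept_prob (T I) f = 1) \<and>
          (\<forall>f. eps_far (1/7) I f \<longrightarrow> 1 - accept_prob (T I) f \<ge> 2/3)"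
        using tester valid unfolding one_sided_tester_def by blast
      have sat1: "\<And>g. satisfying I g \<Longrightarrow> accept_prob (T I) g = 1" and
           far1: "\<And>f. eps_far (1/7) I f \<Longrightarrow> 1 - accept_prob (T I) f \<ge> 2/3"
        using tI by blast+
      have acc: "run t f0" if t: "t \<in> set_pmf (T I)" for t
      proof -
        let ?Q = "qset t f0"
        define g where "g = (\<lambda>x. x \<notin> ?Q)"
        have agree: "run t g = run t f0" by (rule run_agree) (simp add: g_def f0_def)
        have qc: "finite ?Q" "card ?Q \<le> nqueries t f0" using qset_card by auto
        let ?S = "{x\<in>{..<n}. g x}"
        have eS: "?S = {..<n} - ?Q" unfolding g_def by auto
        have "card ({..<n} - ?Q) \<ge> n - card ?Q"
          using diff_card_le_card_Diff[of ?Q "{..<n}"] qc by simp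
        then have "real (card ?S) \<ge> real n - real (card ?Q)" unfolding eS by linarith
        moreover have "real (card ?Q) < 1/6 * real n" using few[OF t] qc by linarith
        ultimately have "5 * n \<le> 6 * card ?S" by linarith
        then have "satisfying I g" unfolding sat_iff using good[of ?S] by auto
        then have "run t g" using support_accepts[OF sat1 t] by blast
        then show ?thesis using agree by simp
      qed
      have "accept_prob (T I) f0 = 1"
        unfolding accept_prob_def using acc by (subst measure_pmf.prob_eq_1) (auto simp: AE_measure_pmf_iff)
      then show False using far1[OF far] by simp
    qed
  qed
qed
  show ?thesis
    apply (rule exI[of _ 3])
    apply (intro conjI)
     apply simp
    apply (rule exI[of _ "1/7"])
    apply (intro conjI)
     apply simp
    apply (rule exI[of _ "1/6"])
    apply (intro conjI)
     apply simp
    apply (rule exI[of _ 1])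
    by (rule main)
qed

end
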